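(* Let $(A_i)_{i\in I}$ be any family of finite partially ordered sets, each with a least element $0_i$ and a greatest element $1_i$, and let $A=\prod_{i\in I}A_i$ with the componentwise partial order $\preccurlyeq$. Let $S$ be the set of elements of $A$ whose $i$-th coordinate is $0_i$ for all but at most one $i$, and $S'$ the set of elements whose $i$-th coordinate is $1_i$ for all but at most one $i$. Let $U(A)\subseteq 2^A$ be the set of up-sets of $(A,\preccurlyeq)$. Then for $x\in U(A)$ the following are equivalent: (i) $x$ is an isolated point of $U(A)$ in the topology induced by the natural topology on $2^A$; (ii) for some natural number $n$ and distinct $i_0,\dots,i_{n-1}\in I$, $x$ is the inverse image under the projection of $A$ onto $A_{i_0}\times\dots\times A_{i_{n-1}}$ of an up-set of that product; (iii) $x$ lies in the lattice of up-sets of $A$ generated (under pairwise unions and intersections) by $\emptyset$ and the sets ${\uparrow}(s)$ for $s\in S$; (iv) $A-x$ lies in the lattice of down-sets of $A$ generated (under pairwise unions and intersections) by $\emptyset$ and the sets ${\downarrow}(s)$ for $s\in S'$.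
   Context: An up-set (down-set) of a poset is a subset closed upward (downward). ${\uparrow}(a)=\{b\mid b\succcurlyeq a\}$ and ${\downarrow}(a)=\{b\mid b\preccurlyeq a\}$. The natural topology on $2^A$ (the set of subsets of $A$) is the product topology of copies of the discrete space $\{0,1\}$, with subbasis the sets $\{x\mid a\in x\}$ and $\{x\mid a\notin x\}$ for $a\in A$. *)

theory Defs
  imports "HOL-Analysis.Analysis"
begin

definition prod_le :: "'i set \<Rightarrow> ('i \<Rightarrow> ('a \<times> 'a) set) \<Rightarrow> ('i \<Rightarrow> 'a) \<Rightarrow> ('i \<Rightarrow> 'a) \<Rightarrow> bool" where
  "prod_le J R a b \<longleftrightarrow> (\<forall>i\<in>J. (a i, b i) \<in> R i)"

definition up_set :: "'b set \<Rightarrow> ('b \<Rightarrow> 'b \<Rightarrow> bool) \<Rightarrow> 'b set \<Rightarrow> bool" where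
  "up_set B le x \<longleftrightarrow> x \<subseteq> B \<and> (\<forall>a\<in>x. \<forall>b\<in>B. le a b \<longrightarrow> b \<in> x)"

definition down_set :: "'b set \<Rightarrow> ('b \<Rightarrow> 'b \<Rightarrow> bool) \<Rightarrow> 'b set \<Rightarrow> bool" where
  "down_set B le x \<longleftrightarrow> x \<subseteq> B \<and> (\<forall>a\<in>x. \<forall>b\<in>B. le b a \<longrightarrow> b \<in> x)"

definition up_of :: "'b set \<Rightarrow> ('b \<Rightarrow> 'b \<Rightarrow> bool) \<Rightarrow> 'b \<Rightarrow> 'b set" where
  "up_of B le a = {b\<in>B. le a b}"

definition down_of :: "'b set \<Rightarrow> ('b \<Rightarrow> 'b \<Rightarrow> bool) \<Rightarrow> 'b \<Rightarrow> 'b set" where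
  "down_of B le a = {b\<in>B. le b a}"

inductive_set gen_lattice :: "'b set set \<Rightarrow> 'b set set" for G where
  base: "g \<in> G \<Longrightarrow> g \<in> gen_lattice G"
| un: "x \<in> gen_lattice G \<Longrightarrow> y \<in> gen_lattice G \<Longrightarrow> x \<union> y \<in> gen_lattice G"
| int: "x \<in> gen_lattice G \<Longrightarrow> y \<in> gen_lattice G \<Longrightarrow> x \<inter> y \<in> gen_lattice G"

(* natural (product of discrete {0,1}) topology on 2^B, via its subbasis *)
definition natural_top :: "'b set \<Rightarrow> 'b set topology" where
  "natural_top B = topology_generated_by
     ({{x. x \<subseteq> B \<and> a \<in> x} | a. a \<in> B} \<union> {{x. x \<subseteq> B \<and> a \<notin> x} | a. a \<in> B})"

end

theory Submission
  imports Defs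
begin

definition detm :: "'i set \<Rightarrow> ('i \<Rightarrow> 'a) set \<Rightarrow> ('i \<Rightarrow> 'a) set \<Rightarrow> bool" where
  "detm J B y \<longleftrightarrow> (\<forall>a\<in>B. \<forall>b\<in>B. (\<forall>i\<in>J. a i = b i) \<longrightarrow> (a \<in> y \<longleftrightarrow> b \<in> y))"

lemma gen_lattice_Union:
  assumes "finite M" "\<forall>m\<in>M. f m \<in> gen_lattice G" "{} \<in> G"
  shows "(\<Union>m\<in>M. f m) \<in> gen_lattice G"
  using assms by (induction M rule: finite_induct) (auto intro: gen_lattice.intros)

locale ppos =
  fixes I :: "'i set" and A :: "'i \<Rightarrow> 'a set" and R :: "'i \<Rightarrow> ('a \<times> 'a) set" and zero :: "'i \<Rightarrow> 'a"
  assumes fin: "\<forall>i\<in>I. finite (A i)" and po: "\<forall>i\<in>I. partial_order_on (A i) (R i)"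
  and zero: "\<forall>i\<in>I. zero i \<in> A i \<and> (\<forall>a\<in>A i. (zero i, a) \<in> R i)"
begin

lemma rrefl: "i \<in> I \<Longrightarrow> a \<in> A i \<Longrightarrow> (a,a) \<in> R i"
  using po partial_order_onD(1) refl_onD by metis

lemma rtrans: "i \<in> I \<Longrightarrow> (a,b) \<in> R i \<Longrightarrow> (b,c) \<in> R i \<Longrightarrow> (a,c) \<in> R i"
  using po partial_order_onD(2) transD by metis

lemma le_refl: "a \<in> PiE I A \<Longrightarrow> prod_le I R a a"
  unfolding prod_le_def using rrefl by (auto simp: PiE_iff)

lemma le_trans: "prod_le I R a b \<Longrightarrow> prod_le I R b c \<Longrightarrow> prod_le I R a c"
  unfolding prod_le_def using rtrans by blast

abbreviation "SS \<equiv> {a \<in> PiE I A. \<exists>j. \<forall>i\<in>I. i \<noteq> j \<longrightarrow> a i = zero i}"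
abbreviation "GG \<equiv> {{}} \<union> {up_of (PiE I A) (prod_le I R) s | s. s \<in> SS}"

lemma gen_det:
  assumes "y \<in> gen_lattice GG"
  shows "\<exists>J. finite J \<and> J \<subseteq> I \<and> detm J (PiE I A) y"
  using assms
proof (induction rule: gen_lattice.induct)
  case (base g)
  then show ?case
  proof
    assume "g \<in> {{}}" then show ?thesis by (intro exI[of _ "{}"]) (auto simp: detm_def)
  next
    assume "g \<in> {up_of (PiE I A) (prod_le I R) s | s. s \<in> SS}"
    then obtain s j where s: "s \<in> PiE I A" "\<forall>i\<in>I. i \<noteq> j \<longrightarrow> s i = zero i"
      and g: "g = up_of (PiE I A) (prod_le I R) s" by blast
    have "detm ({j} \<inter> I) (PiE I A) g"
      unfolding detm_def g up_of_def prod_le_def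
    proof (intro ballI impI)
      fix a b assume a: "a \<in> PiE I A" and b: "b \<in> PiE I A" and ab: "\<forall>i\<in>{j} \<inter> I. a i = b i"
      have "(\<forall>i\<in>I. (s i, a i) \<in> R i) \<longleftrightarrow> (\<forall>i\<in>I. (s i, b i) \<in> R i)"
      proof -
        have "(s i, a i) \<in> R i \<longleftrightarrow> (s i, b i) \<in> R i" if "i \<in> I" for i
        proof (cases "i = j")
          case True then show ?thesis using ab that by auto
        next
          case False
          then have "s i = zero i" using s that by blast
          moreover have "a i \<in> A i" "b i \<in> A i" using a b that by (auto simp: PiE_iff)
          ultimately show ?thesis using zero that by simp
        qed
        then show ?thesis by blast
      qed
      then show "(a \<in> {b \<in> PiE I A. \<forall>i\<in>I. (s i, b i) \<in> R i}) = (b \<in> {ba \<in> PiE I A. \<forall>i\<in>I. (s i, ba i) \<in> R i})"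
        using a b by blast
    qed
    then show ?thesis by (intro exI[of _ "{j} \<inter> I"]) auto
  qed
next
  case (un x y)
  then obtain J1 J2 where J: "finite J1" "J1 \<subseteq> I" "finite J2" "J2 \<subseteq> I" and d1: "detm J1 (PiE I A) x" and d2: "detm J2 (PiE I A) y" by blast
  have "detm (J1 \<union> J2) (PiE I A) (x \<union> y)"
    unfolding detm_def
  proof (intro ballI impI)
    fix a b assume a: "a \<in> PiE I A" and b: "b \<in> PiE I A" and ab: "\<forall>i\<in>J1 \<union> J2. a i = b i"
    have "\<forall>i\<in>J1. a i = b i" "\<forall>i\<in>J2. a i = b i" using ab by auto
    then have "a \<in> x \<longleftrightarrow> b \<in> x" "a \<in> y \<longleftrightarrow> b \<in> y" using d1 d2 a b unfolding detm_def by blast+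
    then show "a \<in> x \<union> y \<longleftrightarrow> b \<in> x \<union> y" by blast
  qed
  then show ?case using J by (intro exI[of _ "J1 \<union> J2"]) auto
next
  case (int x y)
  then obtain J1 J2 where J: "finite J1" "J1 \<subseteq> I" "finite J2" "J2 \<subseteq> I" and d1: "detm J1 (PiE I A) x" and d2: "detm J2 (PiE I A) y" by blast
  have "detm (J1 \<union> J2) (PiE I A) (x \<inter> y)"
    unfolding detm_def
  proof (intro ballI impI)
    fix a b assume a: "a \<in> PiE I A" and b: "b \<in> PiE I A" and ab: "\<forall>i\<in>J1 \<union> J2. a i = b i"
    have "\<forall>i\<in>J1. a i = b i" "\<forall>i\<in>J2. a i = b i" using ab by auto
    then have "a \<in> x \<longleftrightarrow> b \<in> x" "a \<in> y \<longleftrightarrow> b \<in> y" using d1 d2 a b unfolding detm_def by blast+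
    then show "a \<in> x \<inter> y \<longleftrightarrow> b \<in> x \<inter> y" by blast
  qed
  then show ?case using J by (intro exI[of _ "J1 \<union> J2"]) auto
qed

lemma up_in_gen:
  assumes "finite J"
  shows "m \<in> PiE I A \<Longrightarrow> \<forall>i\<in>I. i \<notin> J \<longrightarrow> m i = zero i \<Longrightarrow> up_of (PiE I A) (prod_le I R) m \<in> gen_lattice GG"
  using assms
proof (induction J arbitrary: m rule: finite_induct)
  case empty
  then have "m \<in> SS" by auto
  then show ?case by (blast intro: gen_lattice.base)
next
  case (insert j J)
  show ?case
  proof (cases "j \<in> I")
    case False
    then have "\<forall>i\<in>I. i \<notin> J \<longrightarrow> m i = zero i" using insert(5) by auto
    then show ?thesis using insert(3)[OF insert(4)] by blast
  next
    case True
    define m' where "m' = m(j := zero j)"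
    define e where "e = restrict (\<lambda>i. if i = j then m j else zero i) I"
    have m'B: "m' \<in> PiE I A" using insert(4) True zero unfolding m'_def by (auto simp: PiE_iff extensional_def)
    have m'z: "\<forall>i\<in>I. i \<notin> J \<longrightarrow> m' i = zero i" using insert(5) unfolding m'_def by auto
    have eB: "e \<in> PiE I A" using insert(4) True zero unfolding e_def by (auto simp: PiE_iff)
    have eS: "e \<in> SS" using eB unfolding e_def by auto
    have eq: "up_of (PiE I A) (prod_le I R) m = up_of (PiE I A) (prod_le I R) m' \<inter> up_of (PiE I A) (prod_le I R) e"
    proof (rule set_eqI)
      fix c
      show "c \<in> up_of (PiE I A) (prod_le I R) m \<longleftrightarrow> c \<in> up_of (PiE I A) (prod_le I R) m' \<inter> up_of (PiE I A) (prod_le I R) e"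
        unfolding up_of_def prod_le_def m'_def e_def using zero True
        by (auto simp: PiE_iff)
    qed
    have "up_of (PiE I A) (prod_le I R) m' \<in> gen_lattice GG" using insert(3)[OF m'B m'z] .
    moreover have "up_of (PiE I A) (prod_le I R) e \<in> gen_lattice GG" using eS by (blast intro: gen_lattice.base)
    ultimately show ?thesis unfolding eq by (rule gen_lattice.int)
  qed
qed

lemma det_fg:
  assumes up: "up_set (PiE I A) (prod_le I R) y" and J: "finite J" "J \<subseteq> I" and d: "detm J (PiE I A) y"
  shows "\<exists>M. finite M \<and> M \<subseteq> PiE I A \<and> (\<forall>m\<in>M. \<forall>i\<in>I. i \<notin> J \<longrightarrow> m i = zero i)
     \<and> y = {c \<in> PiE I A. \<exists>m\<in>M. prod_le I R m c}"
proof -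
  define ext where "ext t = restrict (\<lambda>i. if i \<in> J then t i else zero i) I" for t :: "'i \<Rightarrow> 'a"
  define M where "M = ext ` y"
  have M2: "M = ext ` ((\<lambda>a. restrict a J) ` y)"
    unfolding M_def image_image ext_def by (intro image_cong) auto
  have "(\<lambda>a. restrict a J) ` y \<subseteq> PiE J A" using up J(2) unfolding up_set_def by (force simp: PiE_iff)
  moreover have "finite (PiE J A)" using J fin by (intro finite_PiE) auto
  ultimately have finM: "finite M" unfolding M2 by (meson finite_imageI finite_subset)
  have extB: "a \<in> PiE I A \<Longrightarrow> ext a \<in> PiE I A" for a using zero unfolding ext_def by (auto simp: PiE_iff)
  have MB: "M \<subseteq> PiE I A" using up extB unfolding M_def up_set_def by auto
  have Mz: "\<forall>m\<in>M. \<forall>i\<in>I. i \<notin> J \<longrightarrow> m i = zero i" unfolding M_def ext_def by auto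
  have exty: "a \<in> y \<Longrightarrow> ext a \<in> y" for a
  proof -
    assume a: "a \<in> y"
    then have aB: "a \<in> PiE I A" using up unfolding up_set_def by auto
    have "\<forall>i\<in>J. ext a i = a i" using J(2) unfolding ext_def by auto
    then show ?thesis using d extB[OF aB] aB a unfolding detm_def by metis
  qed
  have extle: "a \<in> PiE I A \<Longrightarrow> prod_le I R (ext a) a" for a
    unfolding prod_le_def ext_def using zero rrefl by (auto simp: PiE_iff)
  have "y = {c \<in> PiE I A. \<exists>m\<in>M. prod_le I R m c}"
  proof (rule set_eqI, rule iffI)
    fix c assume c: "c \<in> y"
    then have cB: "c \<in> PiE I A" using up unfolding up_set_def by auto
    show "c \<in> {c \<in> PiE I A. \<exists>m\<in>M. prod_le I R m c}"
      using cB extle[OF cB] c unfolding M_def by auto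
  next
    fix c assume "c \<in> {c \<in> PiE I A. \<exists>m\<in>M. prod_le I R m c}"
    then obtain a where "c \<in> PiE I A" "a \<in> y" "prod_le I R (ext a) c" unfolding M_def by auto
    then show "c \<in> y" using exty[of a] up unfolding up_set_def by blast
  qed
  then show ?thesis using finM MB Mz by blast
qed

lemma gen_iff:
  assumes up: "up_set (PiE I A) (prod_le I R) y"
  shows "y \<in> gen_lattice GG \<longleftrightarrow> (\<exists>J. finite J \<and> J \<subseteq> I \<and> detm J (PiE I A) y)"
proof
  assume "y \<in> gen_lattice GG" then show "\<exists>J. finite J \<and> J \<subseteq> I \<and> detm J (PiE I A) y" by (rule gen_det)
next
  assume "\<exists>J. finite J \<and> J \<subseteq> I \<and> detm J (PiE I A) y"
  then obtain J where J: "finite J" "J \<subseteq> I" "detm J (PiE I A) y" by blast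
  from det_fg[OF up J] obtain M where M: "finite M" "M \<subseteq> PiE I A"
    "\<forall>m\<in>M. \<forall>i\<in>I. i \<notin> J \<longrightarrow> m i = zero i" and y: "y = {c \<in> PiE I A. \<exists>m\<in>M. prod_le I R m c}" by blast
  have "y = (\<Union>m\<in>M. up_of (PiE I A) (prod_le I R) m)" unfolding y up_of_def by auto
  moreover have "(\<Union>m\<in>M. up_of (PiE I A) (prod_le I R) m) \<in> gen_lattice GG"
    using M J(1) up_in_gen by (intro gen_lattice_Union) auto
  ultimately show "y \<in> gen_lattice GG" by simp
qed

lemma ii_iff:
  assumes up: "up_set (PiE I A) (prod_le I R) x"
  shows "(\<exists>n::nat. \<exists>f::nat \<Rightarrow> 'i. inj_on f {..<n} \<and> f ` {..<n} \<subseteq> I \<and>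
                 (\<exists>y. up_set (PiE {..<n} (\<lambda>k. A (f k))) (prod_le {..<n} (\<lambda>k. R (f k))) y \<and>
                      x = {a \<in> PiE I A. restrict (\<lambda>k. a (f k)) {..<n} \<in> y}))
     \<longleftrightarrow> (\<exists>J. finite J \<and> J \<subseteq> I \<and> detm J (PiE I A) x)"
proof
  assume "\<exists>n::nat. \<exists>f::nat \<Rightarrow> 'i. inj_on f {..<n} \<and> f ` {..<n} \<subseteq> I \<and>
                 (\<exists>y. up_set (PiE {..<n} (\<lambda>k. A (f k))) (prod_le {..<n} (\<lambda>k. R (f k))) y \<and>
                      x = {a \<in> PiE I A. restrict (\<lambda>k. a (f k)) {..<n} \<in> y})"
  then show "\<exists>J. finite J \<and> J \<subseteq> I \<and> detm J (PiE I A) x"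
  proof (elim exE conjE)
    fix n :: nat and f :: "nat \<Rightarrow> 'i" and y assume "inj_on f {..<n}" and f: "f ` {..<n} \<subseteq> I"
      and "up_set (PiE {..<n} (\<lambda>k. A (f k))) (prod_le {..<n} (\<lambda>k. R (f k))) y"
      and x: "x = {a \<in> PiE I A. restrict (\<lambda>k. a (f k)) {..<n} \<in> y}"
    have "detm (f ` {..<n}) (PiE I A) x"
      unfolding detm_def
    proof (intro ballI impI)
      fix a b assume a: "a \<in> PiE I A" and b: "b \<in> PiE I A" and ab: "\<forall>i\<in>f ` {..<n}. a i = b i"
      have "restrict (\<lambda>k. a (f k)) {..<n} = restrict (\<lambda>k. b (f k)) {..<n}"
        using ab by (intro restrict_ext) auto
      then show "a \<in> x \<longleftrightarrow> b \<in> x" using a b unfolding x by simp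
    qed
    then show "\<exists>J. finite J \<and> J \<subseteq> I \<and> detm J (PiE I A) x" using f by (auto intro!: exI[of _ "f ` {..<n}"])
  qed
next
  assume "\<exists>J. finite J \<and> J \<subseteq> I \<and> detm J (PiE I A) x"
  then obtain J where J: "finite J" "J \<subseteq> I" and d: "detm J (PiE I A) x" by blast
  obtain h where hb: "bij_betw h {0..<card J} J" using ex_bij_betw_nat_finite[OF J(1)] by blast
  define n where "n = card J"
  have hb': "bij_betw h {..<n} J" using hb unfolding n_def by (simp add: atLeast0LessThan)
  have hinj: "inj_on h {..<n}" and himg: "h ` {..<n} = J" using hb' by (auto simp: bij_betw_def)
  define g where "g = inv_into {..<n} h"
  have hg: "i \<in> J \<Longrightarrow> h (g i) = i" for i unfolding g_def using himg by (simp add: f_inv_into_f)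
  have gl: "i \<in> J \<Longrightarrow> g i < n" for i unfolding g_def using himg by (metis inv_into_into lessThan_iff)
  have gh: "k < n \<Longrightarrow> g (h k) = k" for k unfolding g_def using hinj by (simp add: inv_into_f_f)
  define y where "y = (\<lambda>a. restrict (\<lambda>k. a (h k)) {..<n}) ` x"
  have xB: "x \<subseteq> PiE I A" using up unfolding up_set_def by auto
  have yup: "up_set (PiE {..<n} (\<lambda>k. A (h k))) (prod_le {..<n} (\<lambda>k. R (h k))) y"
    unfolding up_set_def
  proof (intro conjI ballI impI)
    show "y \<subseteq> PiE {..<n} (\<lambda>k. A (h k))"
    proof
      fix t assume "t \<in> y"
      then obtain a where a: "a \<in> x" and t: "t = restrict (\<lambda>k. a (h k)) {..<n}" unfolding y_def by blast
      have "a \<in> PiE I A" using a xB by blast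
      then have "\<forall>k\<in>{..<n}. a (h k) \<in> A (h k)" using himg J(2) by (auto simp: PiE_iff)
      then show "t \<in> PiE {..<n} (\<lambda>k. A (h k))" unfolding t by (simp add: PiE_iff)
    qed
  next
    fix t u assume t: "t \<in> y" and u: "u \<in> PiE {..<n} (\<lambda>k. A (h k))"
      and tu: "prod_le {..<n} (\<lambda>k. R (h k)) t u"
    obtain a where a: "a \<in> x" and ta: "t = restrict (\<lambda>k. a (h k)) {..<n}" using t unfolding y_def by auto
    have aB: "a \<in> PiE I A" using a xB by auto
    define a' where "a' = restrict (\<lambda>i. if i \<in> J then u (g i) else a i) I"
    have "a' i \<in> A i" if i: "i \<in> I" for i
    proof (cases "i \<in> J")
      case True
      have "u (g i) \<in> A (h (g i))" using u gl[OF True] by (auto simp: PiE_iff)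
      then show ?thesis using True hg[OF True] i unfolding a'_def by simp
    next
      case False then show ?thesis using aB i unfolding a'_def by (auto simp: PiE_iff)
    qed
    then have a'B: "a' \<in> PiE I A" unfolding a'_def by (auto simp: PiE_iff)
    have "prod_le I R a a'" unfolding prod_le_def
    proof
      fix i assume i: "i \<in> I"
      show "(a i, a' i) \<in> R i"
      proof (cases "i \<in> J")
        case True
        have "(t (g i), u (g i)) \<in> R (h (g i))" using tu gl[OF True] unfolding prod_le_def by auto
        then show ?thesis using True i hg[OF True] gl[OF True] unfolding a'_def ta by auto
      next
        case False then show ?thesis using i aB rrefl unfolding a'_def by (auto simp: PiE_iff)
      qed
    qed
    then have a'x: "a' \<in> x" using up a a'B unfolding up_set_def by blast
    have "restrict (\<lambda>k. a' (h k)) {..<n} = u"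
    proof (rule ext)
      fix k show "restrict (\<lambda>k. a' (h k)) {..<n} k = u k"
      proof (cases "k < n")
        case True
        then have "h k \<in> J" using himg by auto
        then show ?thesis using True gh J(2) unfolding a'_def by auto
      next
        case False then show ?thesis using u by (auto simp: PiE_iff extensional_def)
      qed
    qed
    then show "u \<in> y" using a'x unfolding y_def by force
  qed
  have xeq: "x = {a \<in> PiE I A. restrict (\<lambda>k. a (h k)) {..<n} \<in> y}"
  proof (rule set_eqI, rule iffI)
    fix a assume "a \<in> x" then show "a \<in> {a \<in> PiE I A. restrict (\<lambda>k. a (h k)) {..<n} \<in> y}"
      using xB unfolding y_def by auto
  next
    fix a assume "a \<in> {a \<in> PiE I A. restrict (\<lambda>k. a (h k)) {..<n} \<in> y}"
    then obtain b where aB: "a \<in> PiE I A" and b: "b \<in> x"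
      and eq: "restrict (\<lambda>k. a (h k)) {..<n} = restrict (\<lambda>k. b (h k)) {..<n}" unfolding y_def by auto
    have "\<forall>i\<in>J. a i = b i"
    proof
      fix i assume "i \<in> J"
      then obtain k where "k < n" "i = h k" using himg by auto
      then show "a i = b i" using fun_cong[OF eq, of k] by auto
    qed
    then show "a \<in> x" using d aB b xB unfolding detm_def by blast
  qed
  show "\<exists>n::nat. \<exists>f::nat \<Rightarrow> 'i. inj_on f {..<n} \<and> f ` {..<n} \<subseteq> I \<and>
                 (\<exists>y. up_set (PiE {..<n} (\<lambda>k. A (f k))) (prod_le {..<n} (\<lambda>k. R (f k))) y \<and>
                      x = {a \<in> PiE I A. restrict (\<lambda>k. a (f k)) {..<n} \<in> y})"
  proof (intro exI[of _ n] exI[of _ h] conjI)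
    show "inj_on h {..<n}" by (rule hinj)
    show "h ` {..<n} \<subseteq> I" using himg J(2) by simp
    show "\<exists>y. up_set (PiE {..<n} (\<lambda>k. A (h k))) (prod_le {..<n} (\<lambda>k. R (h k))) y \<and>
                      x = {a \<in> PiE I A. restrict (\<lambda>k. a (h k)) {..<n} \<in> y}"
      by (intro exI[of _ y] conjI yup xeq)
  qed
qed

end

definition boxset :: "'b set \<Rightarrow> 'b set \<Rightarrow> 'b set \<Rightarrow> 'b set set" where
  "boxset B P N = {w. w \<subseteq> B \<and> P \<subseteq> w \<and> N \<inter> w = {}}"

lemma box:
  assumes "generate_topology_on ({{x. x \<subseteq> B \<and> a \<in> x} | a. a \<in> B} \<union> {{x. x \<subseteq> B \<and> a \<notin> x} | a. a \<in> B}) U"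
  shows "z \<in> U \<Longrightarrow> z \<subseteq> B \<Longrightarrow> \<exists>P N. finite P \<and> finite N \<and> P \<subseteq> B \<and> N \<subseteq> B \<and> P \<subseteq> z \<and> N \<inter> z = {}
     \<and> boxset B P N \<subseteq> U"
  using assms
proof (induction arbitrary: z rule: generate_topology_on.induct)
  case Empty then show ?case by simp
next
  case (Int a b)
  from Int.IH(1)[OF _ Int.prems(2)] Int.prems(1) obtain P1 N1 where 1: "finite P1" "finite N1" "P1 \<subseteq> B" "N1 \<subseteq> B" "P1 \<subseteq> z" "N1 \<inter> z = {}"
     "boxset B P1 N1 \<subseteq> a" by auto
  from Int.IH(2)[OF _ Int.prems(2)] Int.prems(1) obtain P2 N2 where 2: "finite P2" "finite N2" "P2 \<subseteq> B" "N2 \<subseteq> B" "P2 \<subseteq> z" "N2 \<inter> z = {}"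
     "boxset B P2 N2 \<subseteq> b" by auto
  have "boxset B (P1 \<union> P2) (N1 \<union> N2) \<subseteq> boxset B P1 N1" "boxset B (P1 \<union> P2) (N1 \<union> N2) \<subseteq> boxset B P2 N2"
    unfolding boxset_def by auto
  then have "boxset B (P1 \<union> P2) (N1 \<union> N2) \<subseteq> a \<inter> b" using 1(7) 2(7) by blast
  moreover have "finite (P1 \<union> P2)" "finite (N1 \<union> N2)" "P1 \<union> P2 \<subseteq> B" "N1 \<union> N2 \<subseteq> B" "P1 \<union> P2 \<subseteq> z" "(N1 \<union> N2) \<inter> z = {}"
    using 1 2 by auto
  ultimately show ?case by (intro exI[of _ "P1 \<union> P2"] exI[of _ "N1 \<union> N2"] conjI) 
next
  case (UN K)
  then obtain k where k: "k \<in> K" "z \<in> k" by blast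
  from UN.IH[OF k(1) k(2) UN.prems(2)] obtain P N where PN: "finite P" "finite N" "P \<subseteq> B" "N \<subseteq> B" "P \<subseteq> z" "N \<inter> z = {}"
     "boxset B P N \<subseteq> k" by auto
  have "boxset B P N \<subseteq> \<Union>K" using PN(7) k(1) by blast
  then show ?case using PN(1-6) by (intro exI[of _ P] exI[of _ N] conjI)
next
  case (Basis s)
  from Basis.hyps show ?case
  proof
    assume "s \<in> {{x. x \<subseteq> B \<and> a \<in> x} | a. a \<in> B}"
    then obtain a where a: "a \<in> B" "s = {x. x \<subseteq> B \<and> a \<in> x}" by auto
    have "boxset B {a} {} \<subseteq> s" using a unfolding boxset_def by auto
    moreover have "{a} \<subseteq> z" using Basis.prems a by auto
    ultimately have "finite {a} \<and> finite {} \<and> {a} \<subseteq> B \<and> {} \<subseteq> B \<and> {a} \<subseteq> z \<and> {} \<inter> z = {} \<and> boxset B {a} {} \<subseteq> s"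
      using a by simp
    then show ?thesis by blast
  next
    assume "s \<in> {{x. x \<subseteq> B \<and> a \<notin> x} | a. a \<in> B}"
    then obtain a where a: "a \<in> B" "s = {x. x \<subseteq> B \<and> a \<notin> x}" by auto
    have "boxset B {} {a} \<subseteq> s" using a unfolding boxset_def by auto
    moreover have "{a} \<inter> z = {}" using Basis.prems a by auto
    ultimately have "finite {} \<and> finite {a} \<and> {} \<subseteq> B \<and> {a} \<subseteq> B \<and> {} \<subseteq> z \<and> {a} \<inter> z = {} \<and> boxset B {} {a} \<subseteq> s"
      using a by simp
    then show ?thesis by blast
  qed
qed

lemma topspace_nat: "B \<noteq> {} \<Longrightarrow> topspace (natural_top B) = Pow B"
  unfolding natural_top_def topology_generated_by_topspace
proof (rule set_eqI, rule iffI)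
  fix w assume "B \<noteq> {}" "w \<in> Pow B"
  then obtain b where b: "b \<in> B" by blast
  show "w \<in> \<Union> ({{x. x \<subseteq> B \<and> a \<in> x} | a. a \<in> B} \<union> {{x. x \<subseteq> B \<and> a \<notin> x} | a. a \<in> B})"
  proof (cases "b \<in> w")
    case True then show ?thesis using b \<open>w \<in> Pow B\<close> by blast
  next
    case False then show ?thesis using b \<open>w \<in> Pow B\<close> by blast
  qed
qed auto

lemma open_box:
  assumes B: "B \<noteq> {}" and P: "finite P" "P \<subseteq> B" and N: "finite N" "N \<subseteq> B"
  shows "openin (natural_top B) {w. w \<subseteq> B \<and> P \<subseteq> w \<and> N \<inter> w = {}}"
  using P
proof (induction P rule: finite_induct)
  case empty
  show ?case using N
  proof (induction N rule: finite_induct)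
    case empty
    have "{w. w \<subseteq> B \<and> {} \<subseteq> w \<and> {} \<inter> w = {}} = topspace (natural_top B)" using topspace_nat[OF B] by auto
    then show ?case by simp
  next
    case (insert a N)
    have eq: "{w. w \<subseteq> B \<and> {} \<subseteq> w \<and> insert a N \<inter> w = {}} = {w. w \<subseteq> B \<and> {} \<subseteq> w \<and> N \<inter> w = {}} \<inter> {x. x \<subseteq> B \<and> a \<notin> x}" by auto
    have "openin (natural_top B) {x. x \<subseteq> B \<and> a \<notin> x}"
      unfolding natural_top_def openin_topology_generated_by_iff
      using insert(4) by (intro generate_topology_on.Basis) auto
    then show ?case unfolding eq using insert by (intro openin_Int) auto
  qed
next
  case (insert a P)
  have eq: "{w. w \<subseteq> B \<and> insert a P \<subseteq> w \<and> N \<inter> w = {}} = {w. w \<subseteq> B \<and> P \<subseteq> w \<and> N \<inter> w = {}} \<inter> {x. x \<subseteq> B \<and> a \<in> x}" by auto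
  have "openin (natural_top B) {x. x \<subseteq> B \<and> a \<in> x}"
    unfolding natural_top_def openin_topology_generated_by_iff
    using insert(4) by (intro generate_topology_on.Basis) auto
  then show ?case unfolding eq using insert by (intro openin_Int) auto
qed

lemma prod_le_conv: "prod_le I (\<lambda>i. (R i)\<inverse>) a b = prod_le I R b a"
  by (simp add: prod_le_def)

lemma detm_compl: "detm J B (B - x) = detm J B x"
  unfolding detm_def by blast

theorem lemma9p1:
  fixes I :: "'i set"
    and A :: "'i \<Rightarrow> 'a set"
    and R :: "'i \<Rightarrow> ('a \<times> 'a) set"
    and zero one :: "'i \<Rightarrow> 'a"
    and x :: "('i \<Rightarrow> 'a) set"
  assumes fin: "\<forall>i\<in>I. finite (A i)"
    and po: "\<forall>i\<in>I. partial_order_on (A i) (R i)"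
    and zero: "\<forall>i\<in>I. zero i \<in> A i \<and> (\<forall>a\<in>A i. (zero i, a) \<in> R i)"
    and one: "\<forall>i\<in>I. one i \<in> A i \<and> (\<forall>a\<in>A i. (a, one i) \<in> R i)"
    and xU: "up_set (PiE I A) (prod_le I R) x"
  defines "S \<equiv> {a \<in> PiE I A. \<exists>j. \<forall>i\<in>I. i \<noteq> j \<longrightarrow> a i = zero i}"
    and "S' \<equiv> {a \<in> PiE I A. \<exists>j. \<forall>i\<in>I. i \<noteq> j \<longrightarrow> a i = one i}"
    and "UA \<equiv> {y. up_set (PiE I A) (prod_le I R) y}"
  shows "(openin (subtopology (natural_top (PiE I A)) UA) {x}
          \<longleftrightarrow> (\<exists>n::nat. \<exists>f::nat \<Rightarrow> 'i. inj_on f {..<n} \<and> f ` {..<n} \<subseteq> I \<and>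
                 (\<exists>y. up_set (PiE {..<n} (\<lambda>k. A (f k))) (prod_le {..<n} (\<lambda>k. R (f k))) y \<and>
                      x = {a \<in> PiE I A. restrict (\<lambda>k. a (f k)) {..<n} \<in> y})))
       \<and> ((\<exists>n::nat. \<exists>f::nat \<Rightarrow> 'i. inj_on f {..<n} \<and> f ` {..<n} \<subseteq> I \<and>
                 (\<exists>y. up_set (PiE {..<n} (\<lambda>k. A (f k))) (prod_le {..<n} (\<lambda>k. R (f k))) y \<and>
                      x = {a \<in> PiE I A. restrict (\<lambda>k. a (f k)) {..<n} \<in> y}))
          \<longleftrightarrow> x \<in> gen_lattice ({{}} \<union> {up_of (PiE I A) (prod_le I R) s | s. s \<in> S}))
       \<and> (x \<in> gen_lattice ({{}} \<union> {up_of (PiE I A) (prod_le I R) s | s. s \<in> S})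
          \<longleftrightarrow> PiE I A - x \<in> gen_lattice ({{}} \<union> {down_of (PiE I A) (prod_le I R) s | s. s \<in> S'}))"
proof -
  interpret Z: ppos I A R zero using fin po zero by unfold_locales
  interpret O: ppos I A "\<lambda>i. (R i)\<inverse>" one using fin po one by unfold_locales auto
  let ?B = "PiE I A"
  let ?D = "\<exists>J. finite J \<and> J \<subseteq> I \<and> detm J ?B x"
  have xB: "x \<subseteq> ?B" using xU unfolding up_set_def by auto
  have z0: "restrict zero I \<in> ?B" using zero by auto
  then have Bne: "?B \<noteq> {}" by blast
  have ii: "(\<exists>n::nat. \<exists>f::nat \<Rightarrow> 'i. inj_on f {..<n} \<and> f ` {..<n} \<subseteq> I \<and>
                 (\<exists>y. up_set (PiE {..<n} (\<lambda>k. A (f k))) (prod_le {..<n} (\<lambda>k. R (f k))) y \<and>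
                      x = {a \<in> PiE I A. restrict (\<lambda>k. a (f k)) {..<n} \<in> y})) \<longleftrightarrow> ?D"
    by (rule Z.ii_iff[OF xU])
  have iii: "x \<in> gen_lattice ({{}} \<union> {up_of (PiE I A) (prod_le I R) s | s. s \<in> S}) \<longleftrightarrow> ?D"
    unfolding S_def by (rule Z.gen_iff[OF xU])
  have upc: "up_set ?B (prod_le I (\<lambda>i. (R i)\<inverse>)) (?B - x)"
    unfolding up_set_def
  proof (intro conjI ballI impI)
    show "?B - x \<subseteq> ?B" by blast
  next
    fix a b assume a: "a \<in> ?B - x" and b: "b \<in> ?B" and ab: "prod_le I (\<lambda>i. (R i)\<inverse>) a b"
    have ba: "prod_le I R b a" using ab unfolding prod_le_conv .
    show "b \<in> ?B - x"
    proof
      show "b \<in> ?B" by (rule b)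
      show "b \<notin> x"
      proof
        assume "b \<in> x"
        then have "a \<in> x" using xU a ba unfolding up_set_def by blast
        then show False using a by blast
      qed
    qed
  qed
  have Geq: "{down_of (PiE I A) (prod_le I R) s | s. s \<in> S'} = {up_of (PiE I A) (prod_le I (\<lambda>i. (R i)\<inverse>)) s | s. s \<in> S'}"
  proof -
    have "down_of (PiE I A) (prod_le I R) s = up_of (PiE I A) (prod_le I (\<lambda>i. (R i)\<inverse>)) s" for s
      unfolding down_of_def up_of_def prod_le_conv ..
    then show ?thesis by simp
  qed
  have iv: "?B - x \<in> gen_lattice ({{}} \<union> {down_of (PiE I A) (prod_le I R) s | s. s \<in> S'}) \<longleftrightarrow> ?D"
  proof -
    have "?B - x \<in> gen_lattice ({{}} \<union> {up_of ?B (prod_le I (\<lambda>i. (R i)\<inverse>)) s | s. s \<in> S'})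
       \<longleftrightarrow> (\<exists>J. finite J \<and> J \<subseteq> I \<and> detm J ?B (?B - x))"
      unfolding S'_def by (rule O.gen_iff[OF upc])
    then show ?thesis unfolding Geq detm_compl .
  qed
  have i: "openin (subtopology (natural_top ?B) UA) {x} \<longleftrightarrow> ?D"
  proof
    assume "openin (subtopology (natural_top ?B) UA) {x}"
    then obtain U where U: "openin (natural_top ?B) U" and Ux: "{x} = U \<inter> UA"
      unfolding openin_subtopology by blast
    have "x \<in> U" using Ux by auto
    from box[OF U[unfolded natural_top_def openin_topology_generated_by_iff] this xB]
    obtain P N where PN: "finite P" "finite N" "P \<subseteq> ?B" "N \<subseteq> ?B" "P \<subseteq> x" "N \<inter> x = {}"
      and boxU0: "boxset ?B P N \<subseteq> U" by blast
    have boxU: "{w. w \<subseteq> ?B \<and> P \<subseteq> w \<and> N \<inter> w = {}} \<subseteq> U" using boxU0 unfolding boxset_def .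
    have inUA: "up_set ?B (prod_le I R) w \<Longrightarrow> w \<in> U \<Longrightarrow> w = x" for w
    proof -
      assume "up_set ?B (prod_le I R) w" "w \<in> U"
      then have "w \<in> U \<inter> UA" unfolding UA_def by (intro IntI CollectI)
      then have "w \<in> {x}" by (subst Ux)
      then show "w = x" by (rule singletonD)
    qed
    define z1 where "z1 = {c \<in> ?B. \<exists>p\<in>P. prod_le I R p c}"
    have z1up: "up_set ?B (prod_le I R) z1" unfolding up_set_def
    proof (intro conjI ballI impI)
      show "z1 \<subseteq> ?B" unfolding z1_def by blast
    next
      fix a b assume a: "a \<in> z1" and b: "b \<in> ?B" and ab: "prod_le I R a b"
      from a obtain p where "p \<in> P" "prod_le I R p a" unfolding z1_def by blast
      then have "prod_le I R p b" using ab Z.le_trans by blast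
      then show "b \<in> z1" unfolding z1_def using b \<open>p \<in> P\<close> by blast
    qed
    have "P \<subseteq> z1"
    proof
      fix p assume "p \<in> P"
      then have "p \<in> ?B" "prod_le I R p p" using PN(3) Z.le_refl by auto
      then show "p \<in> z1" unfolding z1_def using \<open>p \<in> P\<close> by blast
    qed
    moreover have "z1 \<subseteq> x"
    proof
      fix c assume "c \<in> z1"
      then obtain p where "p \<in> P" "prod_le I R p c" "c \<in> ?B" unfolding z1_def by blast
      then have "p \<in> x" using PN(5) by blast
      then show "c \<in> x" using xU \<open>prod_le I R p c\<close> \<open>c \<in> ?B\<close> unfolding up_set_def by blast
    qed
    moreover have "z1 \<subseteq> ?B" unfolding z1_def by blast
    ultimately have "z1 \<in> {w. w \<subseteq> ?B \<and> P \<subseteq> w \<and> N \<inter> w = {}}" using PN(6) by blast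
    then have "z1 \<in> U" using boxU by blast
    then have z1x: "z1 = x" by (rule inUA[OF z1up])
    define z2 where "z2 = ?B - {c \<in> ?B. \<exists>n\<in>N. prod_le I R c n}"
    have z2up: "up_set ?B (prod_le I R) z2" unfolding up_set_def
    proof (intro conjI ballI impI)
      show "z2 \<subseteq> ?B" unfolding z2_def by blast
    next
      fix a b assume a: "a \<in> z2" and b: "b \<in> ?B" and ab: "prod_le I R a b"
      show "b \<in> z2"
      proof (rule ccontr)
        assume "b \<notin> z2"
        then obtain n where "n \<in> N" "prod_le I R b n" using b unfolding z2_def by blast
        then have "prod_le I R a n" using ab Z.le_trans by blast
        then show False using a \<open>n \<in> N\<close> unfolding z2_def by blast
      qed
    qed
    have "P \<subseteq> z2"
    proof
      fix p assume p: "p \<in> P"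
      show "p \<in> z2"
      proof (rule ccontr)
        assume "p \<notin> z2"
        then obtain n where n: "n \<in> N" "prod_le I R p n" using p PN(3) unfolding z2_def by blast
        have "p \<in> x" using p PN(5) by blast
        moreover have "n \<in> ?B" using n PN(4) by blast
        ultimately have "n \<in> x" using xU n(2) unfolding up_set_def by blast
        then show False using n(1) PN(6) by blast
      qed
    qed
    moreover have "N \<inter> z2 = {}"
    proof -
      have "n \<notin> z2" if "n \<in> N" for n
      proof -
        have "n \<in> ?B" "prod_le I R n n" using that PN(4) Z.le_refl by auto
        then show ?thesis unfolding z2_def using that by blast
      qed
      then show ?thesis by blast
    qed
    moreover have "z2 \<subseteq> ?B" unfolding z2_def by blast
    ultimately have "z2 \<in> {w. w \<subseteq> ?B \<and> P \<subseteq> w \<and> N \<inter> w = {}}" by blast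
    then have "z2 \<in> U" using boxU by blast
    then have z2x: "z2 = x" by (rule inUA[OF z2up])
    have pn: "\<exists>i. i \<in> I \<and> (p i, n i) \<notin> R i" if "p \<in> P" "n \<in> N" for p n
    proof (rule ccontr)
      assume "\<not> ?thesis"
      then have "prod_le I R p n" unfolding prod_le_def by blast
      then have "n \<in> x" using xU PN that unfolding up_set_def by blast
      then show False using PN that by blast
    qed
    define J where "J = (\<lambda>(p,n). SOME i. i \<in> I \<and> (p i, n i) \<notin> R i) ` (P \<times> N)"
    have Jp: "(SOME i. i \<in> I \<and> (p i, n i) \<notin> R i) \<in> I \<and> (p (SOME i. i \<in> I \<and> (p i, n i) \<notin> R i), n (SOME i. i \<in> I \<and> (p i, n i) \<notin> R i)) \<notin> R (SOME i. i \<in> I \<and> (p i, n i) \<notin> R i)"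
      if "p \<in> P" "n \<in> N" for p n using someI_ex[OF pn[OF that]] .
    have Jfin: "finite J" unfolding J_def using PN by auto
    have JI: "J \<subseteq> I" unfolding J_def using Jp by auto
    have one_dir: "b \<in> x" if a: "a \<in> ?B" and b: "b \<in> ?B" and ab: "\<forall>i\<in>J. a i = b i" and ax: "a \<in> x" for a b
    proof (rule ccontr)
      assume bx: "b \<notin> x"
      have "a \<in> z1" using ax z1x by simp
      then obtain p where p: "p \<in> P" "prod_le I R p a" unfolding z1_def by blast
      have "b \<notin> z2" using bx z2x by simp
      then obtain n where n: "n \<in> N" "prod_le I R b n" using b unfolding z2_def by blast
      define i where "i = (SOME i. i \<in> I \<and> (p i, n i) \<notin> R i)"
      have iJ: "i \<in> J" unfolding J_def i_def using p n by force
      have i: "i \<in> I" "(p i, n i) \<notin> R i" using Jp[OF p(1) n(1)] unfolding i_def by auto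
      have "(p i, a i) \<in> R i" "(b i, n i) \<in> R i" using p n i unfolding prod_le_def by auto
      then have "(p i, b i) \<in> R i" "(b i, n i) \<in> R i" using ab iJ by auto
      then have "(p i, n i) \<in> R i" by (rule Z.rtrans[OF i(1)])
      then show False using i by blast
    qed
    have "detm J ?B x" unfolding detm_def
    proof (intro ballI impI)
      fix a b assume a: "a \<in> ?B" and b: "b \<in> ?B" and ab: "\<forall>i\<in>J. a i = b i"
      then have ba: "\<forall>i\<in>J. b i = a i" by simp
      show "a \<in> x \<longleftrightarrow> b \<in> x" using one_dir[OF a b ab] one_dir[OF b a ba] by blast
    qed
    then show ?D using Jfin JI by blast
  next
    assume ?D
    then obtain J where J: "finite J" "J \<subseteq> I" "detm J ?B x" by blast
    from Z.det_fg[OF xU J] obtain M where Mall: "finite M \<and> M \<subseteq> ?B \<and> (\<forall>m\<in>M. \<forall>i\<in>I. i \<notin> J \<longrightarrow> m i = zero i)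
       \<and> x = {c \<in> ?B. \<exists>m\<in>M. prod_le I R m c}" ..
    have M1: "finite M" using Mall by (rule conjunct1)
    have M2: "M \<subseteq> ?B" using Mall[THEN conjunct2, THEN conjunct1] .
    have xM: "x = {c \<in> ?B. \<exists>m\<in>M. prod_le I R m c}" using Mall[THEN conjunct2, THEN conjunct2, THEN conjunct2] .
    have dc: "detm J ?B (?B - x)" using detm_compl[THEN iffD2, OF J(3)] .
    from O.det_fg[OF upc J(1,2) dc] obtain M' where Mall': "finite M' \<and> M' \<subseteq> ?B \<and> (\<forall>m\<in>M'. \<forall>i\<in>I. i \<notin> J \<longrightarrow> m i = one i)
       \<and> ?B - x = {c \<in> ?B. \<exists>m\<in>M'. prod_le I (\<lambda>i. (R i)\<inverse>) m c}" ..
    have M'1: "finite M'" using Mall' by (rule conjunct1)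
    have M'2: "M' \<subseteq> ?B" using Mall'[THEN conjunct2, THEN conjunct1] .
    have xM': "?B - x = {c \<in> ?B. \<exists>m\<in>M'. prod_le I (\<lambda>i. (R i)\<inverse>) m c}" using Mall'[THEN conjunct2, THEN conjunct2, THEN conjunct2] .
    have xM'': "?B - x = {c \<in> ?B. \<exists>m\<in>M'. prod_le I R c m}" using xM' unfolding prod_le_conv .
    define U where "U = {w. w \<subseteq> ?B \<and> M \<subseteq> w \<and> M' \<inter> w = {}}"
    have Uo: "openin (natural_top ?B) U" unfolding U_def by (rule open_box[OF Bne M1 M2 M'1 M'2])
    have MX: "M \<subseteq> x"
    proof
      fix m assume "m \<in> M"
      then have "m \<in> {c \<in> ?B. \<exists>m\<in>M. prod_le I R m c}" using M2 Z.le_refl by blast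
      then show "m \<in> x" by (subst xM)
    qed
    have M'X: "M' \<inter> x = {}"
    proof -
      have "m \<in> ?B - x" if "m \<in> M'" for m
      proof -
        have "m \<in> {c \<in> ?B. \<exists>m\<in>M'. prod_le I R c m}" using that M'2 Z.le_refl by blast
        then show ?thesis by (subst xM'')
      qed
      then show ?thesis by blast
    qed
    have eq: "{x} = U \<inter> UA"
    proof (rule set_eqI, rule iffI)
      fix w assume "w \<in> {x}"
      then have "w = x" by simp
      moreover have "x \<in> U" unfolding U_def using MX M'X xB by blast
      moreover have "x \<in> UA" unfolding UA_def using xU by simp
      ultimately show "w \<in> U \<inter> UA" by simp
    next
      fix w assume w: "w \<in> U \<inter> UA"
      then have wU: "up_set ?B (prod_le I R) w" and wB: "w \<subseteq> ?B" and Mw: "M \<subseteq> w" and M'w: "M' \<inter> w = {}"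
        unfolding U_def UA_def up_set_def by auto
      have "x \<subseteq> w"
      proof
        fix c assume "c \<in> x"
        then have "c \<in> {c \<in> ?B. \<exists>m\<in>M. prod_le I R m c}" by (subst (asm) xM)
        then obtain m where "m \<in> M" "prod_le I R m c" "c \<in> ?B" by blast
        then show "c \<in> w" using Mw wU unfolding up_set_def by blast
      qed
      moreover have "w \<subseteq> x"
      proof
        fix c assume c: "c \<in> w"
        show "c \<in> x"
        proof (rule ccontr)
          assume "c \<notin> x"
          then have "c \<in> ?B - x" using c wB by blast
          then have "c \<in> {c \<in> ?B. \<exists>m\<in>M'. prod_le I R c m}" by (subst (asm) xM'')
          then obtain m where "m \<in> M'" "prod_le I R c m" by blast
          then show False using c wU M'2 M'w unfolding up_set_def by blast
        qed
      qed
      ultimately have "w = x" by (rule subset_antisym[rotated])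
      then show "w \<in> {x}" by simp
    qed
    show "openin (subtopology (natural_top ?B) UA) {x}" unfolding openin_subtopology
    proof (intro exI[of _ U] conjI)
      show "openin (natural_top ?B) U" by (rule Uo)
      show "{x} = U \<inter> UA" by (rule eq)
    qed
  qed
  show ?thesis by (simp only: i ii iii iv)
qed

end
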